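(* Let $\Phi$ be a finite crystallographic root system and let $\beta,\gamma\in\Phi^+$ be distinct positive roots. Then \[ \operatorname{Cov}(\mathcal{X}_\beta,\mathcal{X}_\gamma)=\pm\Big(\frac14-\frac{1}{2\cdot\operatorname{ord}(\beta,\gamma)}\Big), \] with the sign positive if $\langle\beta,\gamma\rangle\ge0$ and negative if $\langle\beta,\gamma\rangle\le 0$. In particular, $\mathcal{X}_\beta$ and $\mathcal{X}_\gamma$ are independent if and only if $\beta$ and $\gamma$ are orthogonal.
   Context: $\Phi\subset V$ is a finite crystallographic root system in a Euclidean space with inner product $\langle\cdot,\cdot\rangle$, with positive roots $\Phi^+$ and Weyl group $W$; $s_\beta$ is the reflection in $\beta$. $\operatorname{ord}(\beta,\gamma)=\min\{k>0 : (s_\beta s_\gamma)^k=e\}$. For $\beta\in\Phi^+$, $\mathcal{X}_\beta$ is the Bernoulli random variable on $W$ with the uniform distribution, $\mathcal{X}_\beta(w)=1$ if $w(\beta)\in-\Phi^+$ and $0$ if $w(\beta)\in\Phi^+$. *)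

theory Defs
  imports "HOL-Probability.Probability"
begin

definition refl :: "'a::euclidean_space \<Rightarrow> 'a \<Rightarrow> 'a" where
  "refl b x = x - ((2 * (x \<bullet> b)) / (b \<bullet> b)) *\<^sub>R b"

definition root_system :: "'a::euclidean_space set \<Rightarrow> bool" where
  "root_system R \<longleftrightarrow>
     finite R \<and> 0 \<notin> R \<and>
     (\<forall>a\<in>R. refl a ` R = R) \<and>
     (\<forall>a\<in>R. \<forall>b\<in>R. (2 * (a \<bullet> b)) / (b \<bullet> b) \<in> \<int>) \<and>
     (\<forall>a\<in>R. \<forall>c::real. c *\<^sub>R a \<in> R \<longrightarrow> c = 1 \<or> c = -1)"

definition positive_system :: "'a::euclidean_space set \<Rightarrow> 'a set \<Rightarrow> bool" where
  "positive_system R P \<longleftrightarrow>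
     (\<exists>v. (\<forall>a\<in>R. a \<bullet> v \<noteq> 0) \<and> P = {a\<in>R. a \<bullet> v > 0})"

inductive_set weyl_group :: "'a::euclidean_space set \<Rightarrow> ('a \<Rightarrow> 'a) set"
  for R :: "'a set" where
  weyl_id: "id \<in> weyl_group R"
| weyl_step: "w \<in> weyl_group R \<Longrightarrow> a \<in> R \<Longrightarrow> refl a \<circ> w \<in> weyl_group R"

definition ord_refl :: "'a::euclidean_space \<Rightarrow> 'a \<Rightarrow> nat" where
  "ord_refl b c = (LEAST k::nat. k > 0 \<and> (refl b \<circ> refl c) ^^ k = id)"

definition unif_W :: "'a::euclidean_space set \<Rightarrow> ('a \<Rightarrow> 'a) measure" where
  "unif_W R = measure_pmf (pmf_of_set (weyl_group R))"

definition X_rv :: "'a::euclidean_space set \<Rightarrow> 'a \<Rightarrow> ('a \<Rightarrow> 'a) \<Rightarrow> real" where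
  "X_rv P b w = (if w b \<in> uminus ` P then 1 else 0)"

definition covariance :: "'w measure \<Rightarrow> ('w \<Rightarrow> real) \<Rightarrow> ('w \<Rightarrow> real) \<Rightarrow> real" where
  "covariance M X Y =
     (\<integral>w. (X w - (\<integral>v. X v \<partial>M)) * (Y w - (\<integral>v. Y v \<partial>M)) \<partial>M)"

end

theory Submission
  imports Defs
begin

lemma refl_linear: "linear (refl b)"
  by (rule linearI) (auto simp: refl_def inner_add_left algebra_simps add_divide_distrib)

lemma refl_add: "refl b (x + y) = refl b x + refl b y"
  using refl_linear linear_add by blast
lemma refl_scale: "refl b (r *\<^sub>R x) = r *\<^sub>R refl b x"
  using refl_linear linear_scale by blast
lemma refl_zero: "refl b 0 = 0" by (simp add: refl_def)

lemma refl_inner: assumes "b \<noteq> 0" shows "refl b x \<bullet> refl b y = x \<bullet> y"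
  using assms by (simp add: refl_def inner_diff_left inner_diff_right inner_commute field_simps)

lemma refl_refl: assumes "b \<noteq> 0" shows "refl b (refl b x) = x"
  using assms by (simp add: refl_def inner_diff_left algebra_simps field_simps scaleR_left_distrib[symmetric])

lemma refl_self: assumes "b \<noteq> 0" shows "refl b b = - b"
  using assms by (simp add: refl_def scaleR_2)

lemma refl_orth: "x \<bullet> b = 0 \<Longrightarrow> refl b x = x"
  by (simp add: refl_def)

lemma rs_nz: "root_system R \<Longrightarrow> a \<in> R \<Longrightarrow> a \<noteq> 0"
  unfolding root_system_def by auto
lemma rs_refl: "root_system R \<Longrightarrow> a \<in> R \<Longrightarrow> x \<in> R \<Longrightarrow> refl a x \<in> R"
  unfolding root_system_def by blast
lemma rs_neg: "root_system R \<Longrightarrow> a \<in> R \<Longrightarrow> - a \<in> R"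
  using rs_refl[of R a a] refl_self[of a] rs_nz by force
lemma rs_fin: "root_system R \<Longrightarrow> finite R"
  unfolding root_system_def by blast
lemma rs_int: "root_system R \<Longrightarrow> a \<in> R \<Longrightarrow> b \<in> R \<Longrightarrow> (2 * (a \<bullet> b)) / (b \<bullet> b) \<in> \<int>"
  unfolding root_system_def by blast
lemma rs_red: "root_system R \<Longrightarrow> a \<in> R \<Longrightarrow> c *\<^sub>R a \<in> R \<Longrightarrow> c = 1 \<or> c = -1"
  unfolding root_system_def by blast

lemma W_comp: "w1 \<in> weyl_group R \<Longrightarrow> w2 \<in> weyl_group R \<Longrightarrow> w1 \<circ> w2 \<in> weyl_group R"
  by (induction w1 rule: weyl_group.induct) (auto simp: comp_assoc intro: weyl_group.intros)

lemma W_refl: "a \<in> R \<Longrightarrow> refl a \<in> weyl_group R"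
  using weyl_group.weyl_step[OF weyl_group.weyl_id, of a R] by simp

lemma W_linear: "w \<in> weyl_group R \<Longrightarrow> linear w"
proof (induction w rule: weyl_group.induct)
  case weyl_id
  then show ?case by (rule linear_id)
next
  case (weyl_step w a)
  then show ?case using linear_compose[OF weyl_step(3) refl_linear[of a]] by (simp add: o_def)
qed

lemma W_inner: "w \<in> weyl_group R \<Longrightarrow> root_system R \<Longrightarrow> w x \<bullet> w y = x \<bullet> y"
  by (induction w rule: weyl_group.induct) (auto simp: refl_inner rs_nz)

lemma W_R: "w \<in> weyl_group R \<Longrightarrow> root_system R \<Longrightarrow> a \<in> R \<Longrightarrow> w a \<in> R"
  by (induction w rule: weyl_group.induct) (auto simp: rs_refl)

lemma W_inv: "w \<in> weyl_group R \<Longrightarrow> root_system R \<Longrightarrow> \<exists>w'\<in>weyl_group R. w' \<circ> w = id \<and> w \<circ> w' = id"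
proof (induction w rule: weyl_group.induct)
  case weyl_id
  then show ?case using weyl_group.weyl_id[of R] by (intro bexI[of _ id]) auto
next
  case (weyl_step w a)
  obtain w' where w': "w' \<in> weyl_group R" "w' \<circ> w = id" "w \<circ> w' = id" using weyl_step(3)[OF weyl_step(4)] by blast
  have "w' \<circ> refl a \<in> weyl_group R" using W_comp[OF w'(1) W_refl[OF weyl_step(2)]] .
  moreover have "(w' \<circ> refl a) \<circ> (refl a \<circ> w) = id"
    using w' refl_refl[OF rs_nz[OF weyl_step(4,2)]] by (auto simp: fun_eq_iff)
  moreover have "(refl a \<circ> w) \<circ> (w' \<circ> refl a) = id"
    using w' refl_refl[OF rs_nz[OF weyl_step(4,2)]] by (auto simp: fun_eq_iff)
  ultimately show ?case by blast
qed

lemma W_span: "w \<in> weyl_group R \<Longrightarrow> w x - x \<in> span R"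
proof (induction w rule: weyl_group.induct)
  case weyl_id
  then show ?case by (simp add: span_zero)
next
  case (weyl_step w a)
  have "refl a (w x) - x = (w x - x) - ((2 * (w x \<bullet> a)) / (a \<bullet> a)) *\<^sub>R a"
    by (simp add: refl_def)
  moreover have "((2 * (w x \<bullet> a)) / (a \<bullet> a)) *\<^sub>R a \<in> span R"
    using weyl_step(2) by (simp add: span_base span_mul)
  then have "(w x - x) - ((2 * (w x \<bullet> a)) / (a \<bullet> a)) *\<^sub>R a \<in> span R"
    using weyl_step(3) span_diff by blast
  then show ?case using \<open>refl a (w x) - x = _\<close> by (simp only: o_apply)
qed

lemma W_fix_id: assumes rs: "root_system R" and u: "u \<in> weyl_group R" and fx: "\<And>a. a \<in> R \<Longrightarrow> u a = a"
  shows "u = id"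
proof
  fix x
  have orth: "orthogonal (u x - x) a" if "a \<in> R" for a
  proof -
    have "u x \<bullet> a = u x \<bullet> u a" using fx that by simp
    also have "\<dots> = x \<bullet> a" using W_inner[OF u rs] .
    finally show ?thesis by (simp add: orthogonal_def inner_diff_left)
  qed
  have "orthogonal (u x - x) (u x - x)"
    by (rule orthogonal_to_span[OF W_span[OF u]]) (use orth in auto)
  then show "u x = id x" by (simp add: orthogonal_def)
qed

lemma W_fin: assumes rs: "root_system R" shows "finite (weyl_group R)"
proof -
  have "inj_on (\<lambda>w. restrict w R) (weyl_group R)"
  proof (rule inj_onI)
    fix w1 w2 assume w1: "w1 \<in> weyl_group R" and w2: "w2 \<in> weyl_group R"
      and eq: "restrict w1 R = restrict w2 R"
    obtain w1' where w1': "w1' \<in> weyl_group R" "w1' \<circ> w1 = id" "w1 \<circ> w1' = id"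
      using W_inv[OF w1 rs] by auto
    have "w1' \<circ> w2 = id"
    proof (rule W_fix_id[OF rs W_comp[OF w1'(1) w2]])
      fix a assume "a \<in> R"
      then have "w2 a = w1 a" using eq by (metis restrict_apply')
      then show "(w1' \<circ> w2) a = a" using w1'(2) by (simp add: fun_eq_iff)
    qed
    then have "w1 \<circ> (w1' \<circ> w2) = w1" by simp
    then show "w1 = w2" using w1'(3) by (simp add: comp_assoc[symmetric])
  qed
  moreover have "(\<lambda>w. restrict w R) ` weyl_group R \<subseteq> R \<rightarrow>\<^sub>E R"
    using W_R[OF _ rs] by auto
  moreover have "finite (R \<rightarrow>\<^sub>E R)" using rs_fin[OF rs] by (simp add: finite_PiE)
  ultimately show ?thesis using finite_imageD finite_subset by metis
qed

definition sbp :: "real \<Rightarrow> real \<times> real \<Rightarrow> real \<times> real" where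
  "sbp A p = (- fst p - A * snd p, snd p)"
definition scp :: "real \<Rightarrow> real \<times> real \<Rightarrow> real \<times> real" where
  "scp B p = (fst p, - snd p - B * fst p)"
definition Tp :: "real \<Rightarrow> real \<Rightarrow> real \<times> real \<Rightarrow> real \<times> real" where
  "Tp A B = sbp A \<circ> scp B"
definition frm :: "real \<Rightarrow> real \<Rightarrow> real \<times> real \<Rightarrow> real" where
  "frm \<beta> \<gamma> p = fst p * \<beta> + snd p * \<gamma>"

definition cnt :: "real \<Rightarrow> real \<Rightarrow> nat \<Rightarrow> real \<Rightarrow> real \<Rightarrow> real" where
  "cnt A B m \<beta> \<gamma> = (\<Sum>k<m.
     (if frm \<beta> \<gamma> ((Tp A B ^^ k) (1,0)) < 0 \<and> frm \<beta> \<gamma> ((Tp A B ^^ k) (0,1)) < 0 then 1 else 0)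
   + (if frm \<beta> \<gamma> ((Tp A B ^^ k) (sbp A (1,0))) < 0 \<and> frm \<beta> \<gamma> ((Tp A B ^^ k) (sbp A (0,1))) < 0 then 1 else 0))"

definition gen :: "real \<Rightarrow> real \<Rightarrow> nat \<Rightarrow> real \<Rightarrow> real \<Rightarrow> bool" where
  "gen A B m \<beta> \<gamma> = (\<forall>k<m. frm \<beta> \<gamma> ((Tp A B ^^ k) (1,0)) \<noteq> 0 \<and> frm \<beta> \<gamma> ((Tp A B ^^ k) (0,1)) \<noteq> 0
      \<and> frm \<beta> \<gamma> ((Tp A B ^^ k) (sbp A (1,0))) \<noteq> 0 \<and> frm \<beta> \<gamma> ((Tp A B ^^ k) (sbp A (0,1))) \<noteq> 0)"

lemma Tp_simp: "Tp A B (x, y) = (- x - A * (- y - B * x), - y - B * x)"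
  by (simp add: Tp_def sbp_def scp_def)

lemma per_0: "(Tp 0 0 ^^ 2) p = p"
  by (cases p) (simp add: numeral_eq_Suc Tp_simp algebra_simps)

lemma np_0: "\<forall>k<2. k = 0 \<or> (Tp 0 0 ^^ k) (1,0) \<noteq> (1,0)"
  by (simp add: numeral_eq_Suc Tp_simp All_less_Suc)

lemma cnt_0: "gen 0 0 2 \<beta> \<gamma> \<Longrightarrow> cnt 0 0 2 \<beta> \<gamma> = 1"
  unfolding gen_def cnt_def
  by (simp add: numeral_eq_Suc Tp_simp sbp_def frm_def lessThan_Suc All_less_Suc algebra_simps; (smt (verit))?)

lemma per_1: "(Tp 1 1 ^^ 3) p = p"
  by (cases p) (simp add: numeral_eq_Suc Tp_simp algebra_simps)

lemma np_1: "\<forall>k<3. k = 0 \<or> (Tp 1 1 ^^ k) (1,0) \<noteq> (1,0)"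
  by (simp add: numeral_eq_Suc Tp_simp All_less_Suc)

lemma cnt_1: "gen 1 1 3 \<beta> \<gamma> \<Longrightarrow> cnt 1 1 3 \<beta> \<gamma> = 2"
  unfolding gen_def cnt_def
  by (simp add: numeral_eq_Suc Tp_simp sbp_def frm_def lessThan_Suc All_less_Suc algebra_simps; (smt (verit))?)

lemma per_2: "(Tp (-1) (-1) ^^ 3) p = p"
  by (cases p) (simp add: numeral_eq_Suc Tp_simp algebra_simps)

lemma np_2: "\<forall>k<3. k = 0 \<or> (Tp (-1) (-1) ^^ k) (1,0) \<noteq> (1,0)"
  by (simp add: numeral_eq_Suc Tp_simp All_less_Suc)

lemma cnt_2: "gen (-1) (-1) 3 \<beta> \<gamma> \<Longrightarrow> cnt (-1) (-1) 3 \<beta> \<gamma> = 1"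
  unfolding gen_def cnt_def
  by (simp add: numeral_eq_Suc Tp_simp sbp_def frm_def lessThan_Suc All_less_Suc algebra_simps; (smt (verit))?)

lemma per_3: "(Tp 1 2 ^^ 4) p = p"
  by (cases p) (simp add: numeral_eq_Suc Tp_simp algebra_simps)

lemma np_3: "\<forall>k<4. k = 0 \<or> (Tp 1 2 ^^ k) (1,0) \<noteq> (1,0)"
  by (simp add: numeral_eq_Suc Tp_simp All_less_Suc)

lemma cnt_3: "gen 1 2 4 \<beta> \<gamma> \<Longrightarrow> cnt 1 2 4 \<beta> \<gamma> = 3"
  unfolding gen_def cnt_def
  by (simp add: numeral_eq_Suc Tp_simp sbp_def frm_def lessThan_Suc All_less_Suc algebra_simps; (smt (verit))?)

lemma per_4: "(Tp 2 1 ^^ 4) p = p"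
  by (cases p) (simp add: numeral_eq_Suc Tp_simp algebra_simps)

lemma np_4: "\<forall>k<4. k = 0 \<or> (Tp 2 1 ^^ k) (1,0) \<noteq> (1,0)"
  by (simp add: numeral_eq_Suc Tp_simp All_less_Suc)

lemma cnt_4: "gen 2 1 4 \<beta> \<gamma> \<Longrightarrow> cnt 2 1 4 \<beta> \<gamma> = 3"
  unfolding gen_def cnt_def
  by (simp add: numeral_eq_Suc Tp_simp sbp_def frm_def lessThan_Suc All_less_Suc algebra_simps; (smt (verit))?)

lemma per_5: "(Tp (-1) (-2) ^^ 4) p = p"
  by (cases p) (simp add: numeral_eq_Suc Tp_simp algebra_simps)

lemma np_5: "\<forall>k<4. k = 0 \<or> (Tp (-1) (-2) ^^ k) (1,0) \<noteq> (1,0)"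
  by (simp add: numeral_eq_Suc Tp_simp All_less_Suc)

lemma cnt_5: "gen (-1) (-2) 4 \<beta> \<gamma> \<Longrightarrow> cnt (-1) (-2) 4 \<beta> \<gamma> = 1"
  unfolding gen_def cnt_def
  by (simp add: numeral_eq_Suc Tp_simp sbp_def frm_def lessThan_Suc All_less_Suc algebra_simps; (smt (verit))?)

lemma per_6: "(Tp (-2) (-1) ^^ 4) p = p"
  by (cases p) (simp add: numeral_eq_Suc Tp_simp algebra_simps)

lemma np_6: "\<forall>k<4. k = 0 \<or> (Tp (-2) (-1) ^^ k) (1,0) \<noteq> (1,0)"
  by (simp add: numeral_eq_Suc Tp_simp All_less_Suc)

lemma cnt_6: "gen (-2) (-1) 4 \<beta> \<gamma> \<Longrightarrow> cnt (-2) (-1) 4 \<beta> \<gamma> = 1"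
  unfolding gen_def cnt_def
  by (simp add: numeral_eq_Suc Tp_simp sbp_def frm_def lessThan_Suc All_less_Suc algebra_simps; (smt (verit))?)

lemma per_7: "(Tp 1 3 ^^ 6) p = p"
  by (cases p) (simp add: numeral_eq_Suc Tp_simp algebra_simps)

lemma np_7: "\<forall>k<6. k = 0 \<or> (Tp 1 3 ^^ k) (1,0) \<noteq> (1,0)"
  by (simp add: numeral_eq_Suc Tp_simp All_less_Suc)

lemma cnt_7: "gen 1 3 6 \<beta> \<gamma> \<Longrightarrow> cnt 1 3 6 \<beta> \<gamma> = 5"
  unfolding gen_def cnt_def
  by (simp add: numeral_eq_Suc Tp_simp sbp_def frm_def lessThan_Suc All_less_Suc algebra_simps; (smt (verit))?)

lemma per_8: "(Tp 3 1 ^^ 6) p = p"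
  by (cases p) (simp add: numeral_eq_Suc Tp_simp algebra_simps)

lemma np_8: "\<forall>k<6. k = 0 \<or> (Tp 3 1 ^^ k) (1,0) \<noteq> (1,0)"
  by (simp add: numeral_eq_Suc Tp_simp All_less_Suc)

lemma cnt_8: "gen 3 1 6 \<beta> \<gamma> \<Longrightarrow> cnt 3 1 6 \<beta> \<gamma> = 5"
  unfolding gen_def cnt_def
  by (simp add: numeral_eq_Suc Tp_simp sbp_def frm_def lessThan_Suc All_less_Suc algebra_simps; (smt (verit))?)

lemma per_9: "(Tp (-1) (-3) ^^ 6) p = p"
  by (cases p) (simp add: numeral_eq_Suc Tp_simp algebra_simps)

lemma np_9: "\<forall>k<6. k = 0 \<or> (Tp (-1) (-3) ^^ k) (1,0) \<noteq> (1,0)"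
  by (simp add: numeral_eq_Suc Tp_simp All_less_Suc)

lemma cnt_9: "gen (-1) (-3) 6 \<beta> \<gamma> \<Longrightarrow> cnt (-1) (-3) 6 \<beta> \<gamma> = 1"
  unfolding gen_def cnt_def
  by (simp add: numeral_eq_Suc Tp_simp sbp_def frm_def lessThan_Suc All_less_Suc algebra_simps; (smt (verit))?)

lemma per_10: "(Tp (-3) (-1) ^^ 6) p = p"
  by (cases p) (simp add: numeral_eq_Suc Tp_simp algebra_simps)

lemma np_10: "\<forall>k<6. k = 0 \<or> (Tp (-3) (-1) ^^ k) (1,0) \<noteq> (1,0)"
  by (simp add: numeral_eq_Suc Tp_simp All_less_Suc)

lemma cnt_10: "gen (-3) (-1) 6 \<beta> \<gamma> \<Longrightarrow> cnt (-3) (-1) 6 \<beta> \<gamma> = 1"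
  unfolding gen_def cnt_def
  by (simp add: numeral_eq_Suc Tp_simp sbp_def frm_def lessThan_Suc All_less_Suc algebra_simps; (smt (verit))?)

definition cartan :: "'a::euclidean_space \<Rightarrow> 'a \<Rightarrow> real" where
  "cartan x y = 2 * (x \<bullet> y) / (y \<bullet> y)"

definition cV :: "'a::euclidean_space \<Rightarrow> 'a \<Rightarrow> 'a \<Rightarrow> real \<times> real \<Rightarrow> 'a" where
  "cV b c z p = z + fst p *\<^sub>R b + snd p *\<^sub>R c"

lemma dbl: "x *\<^sub>R (b::'a::real_vector) + x *\<^sub>R b = (x * 2) *\<^sub>R b"
  by (subst mult_2_right) (rule scaleR_add_left[symmetric])

lemma refl_b_cV: assumes "b \<noteq> 0" "z \<bullet> b = 0"
  shows "refl b (cV b c z p) = cV b c z (sbp (cartan c b) p)"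
proof -
  have bb: "b \<bullet> b \<noteq> 0" using assms by simp
  have "2 * (cV b c z p \<bullet> b) / (b \<bullet> b) = 2 * fst p + snd p * cartan c b"
    using assms bb by (simp add: cV_def cartan_def inner_add_left field_simps)
  then show ?thesis
    by (simp add: refl_def cV_def sbp_def algebra_simps dbl)
qed

lemma refl_c_cV: assumes "c \<noteq> 0" "z \<bullet> c = 0"
  shows "refl c (cV b c z p) = cV b c z (scp (cartan b c) p)"
proof -
  have cc: "c \<bullet> c \<noteq> 0" using assms by simp
  have "2 * (cV b c z p \<bullet> c) / (c \<bullet> c) = 2 * snd p + fst p * cartan b c"
    using assms cc by (simp add: cV_def cartan_def inner_add_left field_simps)
  then show ?thesis
    by (simp add: refl_def cV_def scp_def algebra_simps dbl)
qed

lemma T_cV: assumes "b \<noteq> 0" "c \<noteq> 0" "z \<bullet> b = 0" "z \<bullet> c = 0"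
  shows "refl b (refl c (cV b c z p)) = cV b c z (Tp (cartan c b) (cartan b c) p)"
  using assms by (simp add: refl_b_cV refl_c_cV Tp_def)

lemma Tpow_cV: assumes "b \<noteq> 0" "c \<noteq> 0" "z \<bullet> b = 0" "z \<bullet> c = 0"
  shows "((refl b \<circ> refl c) ^^ k) (cV b c z p) = cV b c z ((Tp (cartan c b) (cartan b c) ^^ k) p)"
  by (induction k) (simp_all add: T_cV[OF assms])

lemma decomp: "\<exists>z p. z \<bullet> b = 0 \<and> z \<bullet> c = 0 \<and> x = cV b c z p"
proof -
  obtain y z where y: "y \<in> span {b, c}" and z: "\<And>w. w \<in> span {b, c} \<Longrightarrow> orthogonal z w"
    and xyz: "x = y + z"
    using orthogonal_subspace_decomp_exists[of "{b, c}" x] by metis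
  obtain k where "y - k *\<^sub>R b \<in> span {c}" using y span_insert[of b "{c}"] by auto
  then obtain t where t: "y - k *\<^sub>R b = t *\<^sub>R c" using span_singleton[of c] by auto
  have "z \<bullet> b = 0" "z \<bullet> c = 0" using z[of b] z[of c] by (auto simp: span_base orthogonal_def inner_commute)
  moreover have "x = cV b c z (k, t)" using xyz t by (simp add: cV_def algebra_simps)
  ultimately show ?thesis by blast
qed

lemma cV_zero_inner: "cV b c 0 p \<bullet> y = frm (b \<bullet> y) (c \<bullet> y) p"
  by (simp add: cV_def frm_def inner_add_left)

lemma cV_b: "cV b c 0 (1,0) = b" and cV_c: "cV b c 0 (0,1) = c"
  by (simp_all add: cV_def)

lemma cV_inj: assumes "b \<noteq> 0" "\<And>t. c \<noteq> t *\<^sub>R b" "cV b c 0 p = cV b c 0 q" shows "p = q"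
proof -
  have eq: "(fst p - fst q) *\<^sub>R b = (snd q - snd p) *\<^sub>R c"
    using assms(3) by (simp add: cV_def algebra_simps)
  show ?thesis
  proof (cases "snd q = snd p")
    case True
    then show ?thesis using eq assms(1) by (simp add: prod_eq_iff)
  next
    case False
    have "c = (1 / (snd q - snd p)) *\<^sub>R ((snd q - snd p) *\<^sub>R c)"
      using False by simp
    also have "\<dots> = ((fst p - fst q) / (snd q - snd p)) *\<^sub>R b"
      unfolding eq[symmetric] by simp
    finally show ?thesis using assms(2) by blast
  qed
qed

locale rs2 =
  fixes R P :: "'a::euclidean_space set" and b c v :: 'a
  assumes rs: "root_system R" and gen_v: "\<And>a. a \<in> R \<Longrightarrow> a \<bullet> v \<noteq> 0"
    and Pdef: "P = {a\<in>R. a \<bullet> v > 0}" and bP: "b \<in> P" and cP: "c \<in> P" and bc: "b \<noteq> c"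
begin

abbreviation "W \<equiv> weyl_group R"

lemma bR: "b \<in> R" and cR: "c \<in> R" using bP cP Pdef by auto
lemma b0: "b \<noteq> 0" and c0: "c \<noteq> 0" using rs_nz[OF rs bR] rs_nz[OF rs cR] .
lemma bv: "b \<bullet> v > 0" and cv: "c \<bullet> v > 0" using bP cP Pdef by auto

lemma nonpar: "c \<noteq> t *\<^sub>R b"
proof
  assume ct: "c = t *\<^sub>R b"
  then have "t = 1 \<or> t = -1" using rs_red[OF rs bR] cR by simp
  then show False
  proof
    assume "t = 1" then show False using ct bc by simp
  next
    assume "t = -1" then show False using ct bv cv by simp
  qed
qed

lemma Wfin: "finite W" using W_fin[OF rs] .
lemma Wne: "W \<noteq> {}" using weyl_group.weyl_id by blast

lemma negP: "a \<in> R \<Longrightarrow> (a \<in> uminus ` P \<longleftrightarrow> a \<bullet> v < 0)"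
proof
  assume "a \<in> R" "a \<in> uminus ` P"
  then show "a \<bullet> v < 0" using Pdef by auto
next
  assume a: "a \<in> R" "a \<bullet> v < 0"
  then have "- a \<in> P" using Pdef rs_neg[OF rs a(1)] by auto
  then show "a \<in> uminus ` P" by (metis image_eqI minus_minus)
qed

lemma X_eq: "w \<in> W \<Longrightarrow> x \<in> R \<Longrightarrow> X_rv P x w = (if w x \<bullet> v < 0 then 1 else 0)"
  unfolding X_rv_def using negP W_R[OF _ rs] by simp

lemma inner_inv: assumes "w \<in> W" "w \<circ> w' = id" shows "w x \<bullet> v = x \<bullet> w' v"
proof -
  have "w x \<bullet> v = w x \<bullet> w (w' v)" using assms(2) by (simp add: fun_eq_iff)
  also have "\<dots> = x \<bullet> w' v" using W_inner[OF assms(1) rs] .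
  finally show ?thesis .
qed

lemma bij_comp: assumes "d \<in> W" shows "bij_betw (\<lambda>w. w \<circ> d) W W"
proof -
  obtain d' where d': "d' \<in> W" "d' \<circ> d = id" "d \<circ> d' = id" using W_inv[OF assms rs] by blast
  show ?thesis
  proof (rule bij_betw_byWitness[where f' = "\<lambda>w. w \<circ> d'"])
    show "\<forall>a\<in>W. a \<circ> d \<circ> d' = a" using d' by (simp add: comp_assoc)
    show "\<forall>a\<in>W. a \<circ> d' \<circ> d = a" using d' by (simp add: comp_assoc)
    show "(\<lambda>w. w \<circ> d) ` W \<subseteq> W" using W_comp assms by blast
    show "(\<lambda>w. w \<circ> d') ` W \<subseteq> W" using W_comp d' by blast
  qed
qed

lemma sum_comp: "d \<in> W \<Longrightarrow> (\<Sum>w\<in>W. f (w \<circ> d)) = (\<Sum>w\<in>W. f w)"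
  using sum.reindex_bij_betw[OF bij_comp] by blast

lemma W_pow: "d \<in> W \<Longrightarrow> d ^^ k \<in> W"
  by (induction k) (auto intro: W_comp weyl_group.weyl_id)

lemma sum_X: assumes x: "x \<in> R" shows "(\<Sum>w\<in>W. X_rv P x w) = card W / 2"
proof -
  have "(\<Sum>w\<in>W. X_rv P x w + X_rv P x (w \<circ> refl x)) = (\<Sum>w\<in>W. 1)"
  proof (rule sum.cong[OF refl])
    fix w assume w: "w \<in> W"
    have "(w \<circ> refl x) \<in> W" using W_comp[OF w W_refl[OF x]] .
    moreover have "(w \<circ> refl x) x = - w x"
      using refl_self[OF rs_nz[OF rs x]] linear_neg[OF W_linear[OF w]] by simp
    moreover have "w x \<bullet> v \<noteq> 0" using gen_v W_R[OF w rs x] by blast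
    ultimately show "X_rv P x w + X_rv P x (w \<circ> refl x) = 1"
      using X_eq[OF w x] X_eq[of "w \<circ> refl x" x] x by auto
  qed
  moreover have "(\<Sum>w\<in>W. X_rv P x w + X_rv P x (w \<circ> refl x)) = 2 * (\<Sum>w\<in>W. X_rv P x w)"
    using sum_comp[OF W_refl[OF x], of "X_rv P x"] by (simp add: sum.distrib)
  ultimately show ?thesis by simp
qed

end

lemma int_cases: fixes i j :: int assumes "i*j < 4" "0 < i" "0 < j"
  shows "(i=1\<and>j=1) \<or> (i=1\<and>j=2) \<or> (i=2\<and>j=1) \<or> (i=1\<and>j=3) \<or> (i=3\<and>j=1)"
proof -
  have "i \<le> i*j" "j \<le> i*j" using assms by (simp_all add: mult_le_cancel_left1 mult_le_cancel_right1)
  then have "i < 4" "j < 4" using assms by linarith+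
  then have "i = 1 \<or> i = 2 \<or> i = 3" "j = 1 \<or> j = 2 \<or> j = 3" using assms by presburger+
  then show ?thesis using assms(1) by auto
qed

context rs2 begin

abbreviation "A \<equiv> cartan c b"
abbreviation "B \<equiv> cartan b c"

lemma strict_cs: "(b \<bullet> c)^2 < (b \<bullet> b) * (c \<bullet> c)"
proof -
  have le: "\<bar>b \<bullet> c\<bar> \<le> norm b * norm c" by (rule Cauchy_Schwarz_ineq2)
  have ne: "\<bar>b \<bullet> c\<bar> \<noteq> norm b * norm c"
  proof
    assume "\<bar>b \<bullet> c\<bar> = norm b * norm c"
    then have "norm b *\<^sub>R c = norm c *\<^sub>R b \<or> norm b *\<^sub>R c = - norm c *\<^sub>R b"
      using norm_cauchy_schwarz_abs_eq by blast
    then obtain t where "norm b *\<^sub>R c = t *\<^sub>R b" by (metis scaleR_minus_left)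
    then have "c = (t / norm b) *\<^sub>R b" using b0
      by (metis divide_inverse_commute nonzero_inverse_scaleR_distrib norm_eq_zero scaleR_scaleR
          inverse_inverse_eq scaleR_one right_inverse mult.commute)
    then show False using nonpar by blast
  qed
  have "\<bar>b \<bullet> c\<bar> < norm b * norm c" using le ne by simp
  then have "\<bar>b \<bullet> c\<bar>^2 < (norm b * norm c)^2"
    by (intro power_strict_mono) auto
  then show ?thesis by (simp add: power_mult_distrib dot_square_norm[symmetric] power2_norm_eq_inner)
qed

lemma AB_lt4: "A * B < 4"
proof -
  have bb: "b \<bullet> b > 0" and cc: "c \<bullet> c > 0" using b0 c0 by auto
  have "A * B = 4 * (b \<bullet> c)^2 / ((b \<bullet> b) * (c \<bullet> c))"
    by (simp add: cartan_def inner_commute power2_eq_square field_simps)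
  also have "\<dots> < 4" using strict_cs bb cc by (simp add: field_simps)
  finally show ?thesis .
qed

lemma A_int: "A \<in> \<int>" using rs_int[OF rs cR bR] by (simp add: cartan_def)
lemma B_int: "B \<in> \<int>" using rs_int[OF rs bR cR] by (simp add: cartan_def)

lemma A_sgn: "(A > 0 \<longleftrightarrow> b \<bullet> c > 0) \<and> (A < 0 \<longleftrightarrow> b \<bullet> c < 0) \<and> (A = 0 \<longleftrightarrow> b \<bullet> c = 0)"
  using b0 inner_ge_zero[of b] by (auto simp: cartan_def inner_commute divide_pos_pos zero_less_divide_iff divide_less_0_iff) (meson inner_ge_zero not_le)+
lemma B_sgn: "(B > 0 \<longleftrightarrow> b \<bullet> c > 0) \<and> (B < 0 \<longleftrightarrow> b \<bullet> c < 0) \<and> (B = 0 \<longleftrightarrow> b \<bullet> c = 0)"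
  using c0 inner_ge_zero[of c] by (auto simp: cartan_def inner_commute divide_pos_pos zero_less_divide_iff divide_less_0_iff) (meson inner_ge_zero not_le)+

lemma AB_cases:
  "(A = 0 \<and> B = 0) \<or> (A = 1 \<and> B = 1) \<or> (A = -1 \<and> B = -1) \<or>
   (A = 1 \<and> B = 2) \<or> (A = 2 \<and> B = 1) \<or> (A = -1 \<and> B = -2) \<or> (A = -2 \<and> B = -1) \<or>
   (A = 1 \<and> B = 3) \<or> (A = 3 \<and> B = 1) \<or> (A = -1 \<and> B = -3) \<or> (A = -3 \<and> B = -1)"
proof -
  obtain i where i: "A = of_int i" using A_int Ints_cases by metis
  obtain j where j: "B = of_int j" using B_int Ints_cases by metis
  have ij: "i * j < 4" using AB_lt4 i j by (metis of_int_less_iff of_int_mult of_int_numeral)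
  consider "b \<bullet> c > 0" | "b \<bullet> c < 0" | "b \<bullet> c = 0" by linarith
  then show ?thesis
  proof cases
    case 1
    then have "0 < i" "0 < j" using A_sgn B_sgn i j by auto
    then show ?thesis using int_cases[OF ij] i j by auto
  next
    case 2
    then have "0 < -i" "0 < -j" using A_sgn B_sgn i j by auto
    moreover have "(-i) * (-j) < 4" using ij by simp
    ultimately show ?thesis using int_cases[of "-i" "-j"] i j by auto
  next
    case 3
    then show ?thesis using A_sgn B_sgn by auto
  qed
qed

lemma dihedral_data: "\<exists>m K. m \<ge> 2 \<and> (\<forall>p. (Tp A B ^^ m) p = p) \<and> (\<forall>k<m. k = 0 \<or> (Tp A B ^^ k) (1,0) \<noteq> (1,0))
   \<and> (\<forall>\<beta> \<gamma>. gen A B m \<beta> \<gamma> \<longrightarrow> cnt A B m \<beta> \<gamma> = K)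
   \<and> (b \<bullet> c \<ge> 0 \<longrightarrow> K = real m - 1) \<and> (b \<bullet> c \<le> 0 \<longrightarrow> K = 1) \<and> (b \<bullet> c = 0 \<longleftrightarrow> m = 2)"
  using AB_cases A_sgn
  apply (elim disjE conjE)
  subgoal by (rule exI[of _ 2], rule exI[of _ 1]) (simp add: per_0 np_0 cnt_0)
  subgoal by (rule exI[of _ 3], rule exI[of _ 2]) (simp add: per_1 np_1 cnt_1)
  subgoal by (rule exI[of _ 3], rule exI[of _ 1]) (simp add: per_2 np_2 cnt_2)
  subgoal by (rule exI[of _ 4], rule exI[of _ 3]) (simp add: per_3 np_3 cnt_3)
  subgoal by (rule exI[of _ 4], rule exI[of _ 3]) (simp add: per_4 np_4 cnt_4)
  subgoal by (rule exI[of _ 4], rule exI[of _ 1]) (simp add: per_5 np_5 cnt_5)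
  subgoal by (rule exI[of _ 4], rule exI[of _ 1]) (simp add: per_6 np_6 cnt_6)
  subgoal by (rule exI[of _ 6], rule exI[of _ 5]) (simp add: per_7 np_7 cnt_7)
  subgoal by (rule exI[of _ 6], rule exI[of _ 5]) (simp add: per_8 np_8 cnt_8)
  subgoal by (rule exI[of _ 6], rule exI[of _ 1]) (simp add: per_9 np_9 cnt_9)
  subgoal by (rule exI[of _ 6], rule exI[of _ 1]) (simp add: per_10 np_10 cnt_10)
  done

end

context rs2 begin

abbreviation "T \<equiv> refl b \<circ> refl c"

lemma T_W: "T \<in> W" using W_comp[OF W_refl[OF bR] W_refl[OF cR]] .

lemma Tpow0: "(T ^^ k) (cV b c 0 p) = cV b c 0 ((Tp A B ^^ k) p)"
  using Tpow_cV[OF b0 c0, of 0] by simp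

lemma ord_eq: assumes m2: "m \<ge> 2" and per: "\<forall>p. (Tp A B ^^ m) p = p"
  and np: "\<forall>k<m. k = 0 \<or> (Tp A B ^^ k) (1,0) \<noteq> (1,0)"
  shows "ord_refl b c = m"
  unfolding ord_refl_def
proof (rule Least_equality)
  have "(T ^^ m) x = x" for x
  proof -
    obtain z p where z: "z \<bullet> b = 0" "z \<bullet> c = 0" and x: "x = cV b c z p" using decomp by blast
    show ?thesis using Tpow_cV[OF b0 c0 z, of m p] per x by simp
  qed
  then show "0 < m \<and> T ^^ m = id" using m2 by (auto simp: fun_eq_iff)
next
  fix k assume k: "0 < k \<and> T ^^ k = id"
  show "m \<le> k"
  proof (rule ccontr)
    assume "\<not> m \<le> k"
    then have "k < m" by simp
    then have ne: "(Tp A B ^^ k) (1,0) \<noteq> (1,0)" using np k by blast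
    have "cV b c 0 ((Tp A B ^^ k) (1,0)) = cV b c 0 (1,0)"
      using Tpow0[of k "(1,0)"] k by simp
    then have "(Tp A B ^^ k) (1,0) = (1,0)" using cV_inj[OF b0 nonpar] by blast
    then show False using ne by simp
  qed
qed

lemma X_comp: assumes w: "w \<in> W" and w': "w \<circ> w' = id" and d: "d \<in> W" and x: "x \<in> R"
  shows "X_rv P x (w \<circ> d) = (if d x \<bullet> w' v < 0 then 1 else 0)"
    and "d x \<bullet> w' v \<noteq> 0"
proof -
  have wd: "w \<circ> d \<in> W" using W_comp[OF w d] .
  have "(w \<circ> d) x \<bullet> v = d x \<bullet> w' v" using inner_inv[OF w w'] by simp
  then show "X_rv P x (w \<circ> d) = (if d x \<bullet> w' v < 0 then 1 else 0)" using X_eq[OF wd x] by simp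
  show "d x \<bullet> w' v \<noteq> 0" using \<open>(w \<circ> d) x \<bullet> v = d x \<bullet> w' v\<close> gen_v W_R[OF wd rs x] by metis
qed

lemma Tb_refl: "(T ^^ k \<circ> refl b) (cV b c 0 p) = cV b c 0 ((Tp A B ^^ k) (sbp A p))"
  using refl_b_cV[OF b0, of 0 c p] Tpow0 by simp

lemma inner_sum: fixes K :: real assumes w: "w \<in> W" and cntK: "\<forall>\<beta> \<gamma>. gen A B m \<beta> \<gamma> \<longrightarrow> cnt A B m \<beta> \<gamma> = K"
  shows "(\<Sum>k<m. X_rv P b (w \<circ> T ^^ k) * X_rv P c (w \<circ> T ^^ k)
     + X_rv P b (w \<circ> (T ^^ k \<circ> refl b)) * X_rv P c (w \<circ> (T ^^ k \<circ> refl b))) = K"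
proof -
  obtain w' where w': "w' \<in> W" "w' \<circ> w = id" "w \<circ> w' = id" using W_inv[OF w rs] by blast
  define y where "y = w' v"
  define \<beta> where "\<beta> = b \<bullet> y"
  define \<gamma> where "\<gamma> = c \<bullet> y"
  have d1: "T ^^ k \<in> W" for k using W_pow[OF T_W] .
  have d2: "T ^^ k \<circ> refl b \<in> W" for k using W_comp[OF d1 W_refl[OF bR]] .
  have e1: "(T ^^ k) b \<bullet> y = frm \<beta> \<gamma> ((Tp A B ^^ k) (1,0))" for k
    using Tpow0[of k "(1,0)"] by (simp add: cV_b cV_zero_inner \<beta>_def \<gamma>_def)
  have e2: "(T ^^ k) c \<bullet> y = frm \<beta> \<gamma> ((Tp A B ^^ k) (0,1))" for k
    using Tpow0[of k "(0,1)"] by (simp add: cV_c cV_zero_inner \<beta>_def \<gamma>_def)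
  have e3: "(T ^^ k \<circ> refl b) b \<bullet> y = frm \<beta> \<gamma> ((Tp A B ^^ k) (sbp A (1,0)))" for k
    using Tb_refl[of k "(1,0)"] by (simp add: cV_b cV_zero_inner \<beta>_def \<gamma>_def del: comp_apply)
  have e4: "(T ^^ k \<circ> refl b) c \<bullet> y = frm \<beta> \<gamma> ((Tp A B ^^ k) (sbp A (0,1)))" for k
    using Tb_refl[of k "(0,1)"] by (simp add: cV_c cV_zero_inner \<beta>_def \<gamma>_def del: comp_apply)
  have g: "gen A B m \<beta> \<gamma>"
    unfolding gen_def
    using X_comp(2)[OF w w'(3) d1 bR] X_comp(2)[OF w w'(3) d1 cR]
      X_comp(2)[OF w w'(3) d2 bR] X_comp(2)[OF w w'(3) d2 cR]
    by (simp add: e1 e2 e3 e4 y_def[symmetric] del: comp_apply)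
  have "(\<Sum>k<m. X_rv P b (w \<circ> T ^^ k) * X_rv P c (w \<circ> T ^^ k)
     + X_rv P b (w \<circ> (T ^^ k \<circ> refl b)) * X_rv P c (w \<circ> (T ^^ k \<circ> refl b))) = cnt A B m \<beta> \<gamma>"
    unfolding cnt_def
  proof (rule sum.cong[OF refl])
    fix k
    show "X_rv P b (w \<circ> T ^^ k) * X_rv P c (w \<circ> T ^^ k)
     + X_rv P b (w \<circ> (T ^^ k \<circ> refl b)) * X_rv P c (w \<circ> (T ^^ k \<circ> refl b)) =
      (if frm \<beta> \<gamma> ((Tp A B ^^ k) (1,0)) < 0 \<and> frm \<beta> \<gamma> ((Tp A B ^^ k) (0,1)) < 0 then 1 else 0)
   + (if frm \<beta> \<gamma> ((Tp A B ^^ k) (sbp A (1,0))) < 0 \<and> frm \<beta> \<gamma> ((Tp A B ^^ k) (sbp A (0,1))) < 0 then 1 else 0)"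
      using X_comp(1)[OF w w'(3) d1 bR] X_comp(1)[OF w w'(3) d1 cR]
        X_comp(1)[OF w w'(3) d2 bR] X_comp(1)[OF w w'(3) d2 cR]
      by (simp add: e1 e2 e3 e4 y_def[symmetric] del: comp_apply)
  qed
  then show ?thesis using cntK g by simp
qed

lemma sum_XY: fixes K :: real assumes m: "m > 0" and cntK: "\<forall>\<beta> \<gamma>. gen A B m \<beta> \<gamma> \<longrightarrow> cnt A B m \<beta> \<gamma> = K"
  shows "(\<Sum>w\<in>W. X_rv P b w * X_rv P c w) = card W * K / (2 * m)"
proof -
  let ?F = "\<lambda>w. X_rv P b w * X_rv P c w"
  have d1: "T ^^ k \<in> W" for k using W_pow[OF T_W] .
  have d2: "T ^^ k \<circ> refl b \<in> W" for k using W_comp[OF d1 W_refl[OF bR]] .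
  have "(\<Sum>w\<in>W. \<Sum>k<m. ?F (w \<circ> T ^^ k) + ?F (w \<circ> (T ^^ k \<circ> refl b))) = (\<Sum>w\<in>W. K)"
    using inner_sum[OF _ cntK] by (intro sum.cong) auto
  also have "\<dots> = card W * K" by simp
  finally have 1: "(\<Sum>w\<in>W. \<Sum>k<m. ?F (w \<circ> T ^^ k) + ?F (w \<circ> (T ^^ k \<circ> refl b))) = card W * K" .
  have "(\<Sum>w\<in>W. \<Sum>k<m. ?F (w \<circ> T ^^ k) + ?F (w \<circ> (T ^^ k \<circ> refl b)))
      = (\<Sum>k<m. \<Sum>w\<in>W. ?F (w \<circ> T ^^ k) + ?F (w \<circ> (T ^^ k \<circ> refl b)))"
    by (rule sum.swap)
  also have "\<dots> = (\<Sum>k<m. 2 * (\<Sum>w\<in>W. ?F w))"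
    by (intro sum.cong refl) (simp add: sum.distrib sum_comp[OF d1, of ?F] sum_comp[OF d2, of ?F])
  also have "\<dots> = 2 * m * (\<Sum>w\<in>W. ?F w)" by simp
  finally show ?thesis using 1 m by (simp add: field_simps)
qed

end

lemma pmf_indep_var:
  assumes "\<And>A B. measure (measure_pmf p) (X -` A \<inter> Y -` B) = measure (measure_pmf p) (X -` A) * measure (measure_pmf p) (Y -` B)"
  shows "prob_space.indep_var (measure_pmf p) (count_space UNIV) X (count_space UNIV) Y"
proof -
  let ?SX = "{X -` A \<inter> space (measure_pmf p) | A. A \<in> sets (count_space UNIV)}"
  let ?SY = "{Y -` A \<inter> space (measure_pmf p) | A. A \<in> sets (count_space UNIV)}"
  have "prob_space.indep_set (measure_pmf p) ?SX ?SY"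
    by (rule prob_space.indep_setI[OF prob_space_measure_pmf]) (auto simp: assms Int_commute)
  then have i: "prob_space.indep_sets (measure_pmf p) (case_bool ?SX ?SY) UNIV" unfolding prob_space.indep_set_def[OF prob_space_measure_pmf] .
  have eq: "(\<lambda>i. {case_bool X Y i -` A \<inter> space (measure_pmf p) | A. A \<in> sets (case_bool (count_space UNIV) (count_space UNIV) i)})
     = case_bool ?SX ?SY"
    by (rule ext) (auto split: bool.split)
  show ?thesis unfolding prob_space.indep_var_def[OF prob_space_measure_pmf] prob_space.indep_vars_def2[OF prob_space_measure_pmf]
    using i eq by (auto split: bool.split)
qed

context rs2 begin

lemma integral_W: "(\<integral>w. f w \<partial>unif_W R) = (\<Sum>w\<in>W. f w) / card W"
  unfolding unif_W_def using integral_pmf_of_set[OF Wne Wfin] .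

lemma prob_W: "measure (unif_W R) S = (\<Sum>w\<in>W. indicator S w) / card W"
proof -
  have "(\<Sum>w\<in>W. indicator S w :: real) = real (card (W \<inter> S))"
    using Wfin by (simp add: indicator_def sum.If_cases Int_def)
  then show ?thesis
    unfolding unif_W_def using measure_pmf_of_set[OF Wne Wfin, where A=S] by (simp add: Int_commute)
qed

lemma cov_formula: "covariance (unif_W R) (X_rv P b) (X_rv P c) = (\<Sum>w\<in>W. X_rv P b w * X_rv P c w) / card W - 1/4"
proof -
  have N: "card W > 0" using Wfin Wne by (simp add: card_gt_0_iff)
  have Eb: "(\<integral>w. X_rv P b w \<partial>unif_W R) = 1/2" using integral_W sum_X[OF bR] N by simp
  have Ec: "(\<integral>w. X_rv P c w \<partial>unif_W R) = 1/2" using integral_W sum_X[OF cR] N by simp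
  have "(\<Sum>w\<in>W. (X_rv P b w - 1/2) * (X_rv P c w - 1/2))
      = (\<Sum>w\<in>W. X_rv P b w * X_rv P c w - (1/2) * X_rv P b w - (1/2) * X_rv P c w + 1/4)"
    by (intro sum.cong refl) (simp add: algebra_simps)
  also have "\<dots> = (\<Sum>w\<in>W. X_rv P b w * X_rv P c w) - (1/2) * (\<Sum>w\<in>W. X_rv P b w) - (1/2) * (\<Sum>w\<in>W. X_rv P c w) + card W / 4"
    by (simp add: sum.distrib sum_subtractf sum_distrib_left)
  also have "\<dots> = (\<Sum>w\<in>W. X_rv P b w * X_rv P c w) - card W / 4"
    using sum_X[OF bR] sum_X[OF cR] by simp
  finally have s: "(\<Sum>w\<in>W. (X_rv P b w - 1/2) * (X_rv P c w - 1/2)) = (\<Sum>w\<in>W. X_rv P b w * X_rv P c w) - card W / 4" .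
  have "covariance (unif_W R) (X_rv P b) (X_rv P c) = (\<integral>w. (X_rv P b w - 1/2) * (X_rv P c w - 1/2) \<partial>unif_W R)"
    unfolding covariance_def Eb Ec ..
  also have "\<dots> = (\<Sum>w\<in>W. (X_rv P b w - 1/2) * (X_rv P c w - 1/2)) / card W" by (rule integral_W)
  finally show ?thesis unfolding s using N by (simp add: field_simps)
qed

lemma ind_X: "indicator S1 (X_rv P x w) = (indicator S1 0 :: real) + X_rv P x w * (indicator S1 1 - indicator S1 0)"
  by (simp add: X_rv_def)

lemma indep_if: assumes S: "(\<Sum>w\<in>W. X_rv P b w * X_rv P c w) = card W / 4"
  shows "prob_space.indep_var (unif_W R) (count_space UNIV) (X_rv P b) (count_space UNIV) (X_rv P c)"
  unfolding unif_W_def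
proof (rule pmf_indep_var, fold unif_W_def)
  fix S1 S2 :: "real set"
  let ?X = "X_rv P b" and ?Y = "X_rv P c"
  define a0 where "a0 = (indicator S1 (0::real) :: real)"
  define a1 where "a1 = (indicator S1 (1::real) :: real)"
  define b0' where "b0' = (indicator S2 (0::real) :: real)"
  define b1 where "b1 = (indicator S2 (1::real) :: real)"
  have N: "card W > 0" using Wfin Wne by (simp add: card_gt_0_iff)
  have "(\<Sum>w\<in>W. indicator (?X -` S1 \<inter> ?Y -` S2) w :: real)
     = (\<Sum>w\<in>W. a0 * b0' + (a0 * (b1 - b0')) * ?Y w + ((a1 - a0) * b0') * ?X w + ((a1 - a0) * (b1 - b0')) * (?X w * ?Y w))"
  proof (intro sum.cong refl)
    fix w
    have "indicator (?X -` S1 \<inter> ?Y -` S2) w = (indicator S1 (?X w) :: real) * indicator S2 (?Y w)"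
      by (simp add: indicator_def)
    also have "\<dots> = (a0 + ?X w * (a1 - a0)) * (b0' + ?Y w * (b1 - b0'))"
      unfolding ind_X a0_def a1_def b0'_def b1_def ..
    finally show "indicator (?X -` S1 \<inter> ?Y -` S2) w = a0 * b0' + (a0 * (b1 - b0')) * ?Y w + ((a1 - a0) * b0') * ?X w + ((a1 - a0) * (b1 - b0')) * (?X w * ?Y w)"
      by (simp add: algebra_simps)
  qed
  also have "\<dots> = card W * a0 * b0' + (a0 * (b1 - b0')) * (card W / 2) + ((a1 - a0) * b0') * (card W / 2) + ((a1 - a0) * (b1 - b0')) * (card W / 4)"
    by (simp add: sum.distrib sum_distrib_left[symmetric] sum_X[OF bR] sum_X[OF cR] S)
  finally have 1: "(\<Sum>w\<in>W. indicator (?X -` S1 \<inter> ?Y -` S2) w :: real) = \<dots>" .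
  have 2: "(\<Sum>w\<in>W. indicator (?X -` S1) w :: real) = card W * a0 + (a1 - a0) * (card W / 2)"
  proof -
    have "(\<Sum>w\<in>W. indicator (?X -` S1) w :: real) = (\<Sum>w\<in>W. a0 + (a1 - a0) * ?X w)"
      by (intro sum.cong refl) (simp add: ind_X[unfolded indicator_def] indicator_def a0_def a1_def algebra_simps)
    also have "\<dots> = card W * a0 + (a1 - a0) * (card W / 2)"
      by (simp add: sum.distrib sum_distrib_left[symmetric] sum_X[OF bR])
    finally show ?thesis .
  qed
  have 3: "(\<Sum>w\<in>W. indicator (?Y -` S2) w :: real) = card W * b0' + (b1 - b0') * (card W / 2)"
  proof -
    have "(\<Sum>w\<in>W. indicator (?Y -` S2) w :: real) = (\<Sum>w\<in>W. b0' + (b1 - b0') * ?Y w)"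
      by (intro sum.cong refl) (simp add: ind_X[unfolded indicator_def] indicator_def b0'_def b1_def algebra_simps)
    also have "\<dots> = card W * b0' + (b1 - b0') * (card W / 2)"
      by (simp add: sum.distrib sum_distrib_left[symmetric] sum_X[OF cR])
    finally show ?thesis .
  qed
  show "measure (unif_W R) (?X -` S1 \<inter> ?Y -` S2) = measure (unif_W R) (?X -` S1) * measure (unif_W R) (?Y -` S2)"
    unfolding prob_W 1 2 3 using N by (simp add: field_simps)
qed

lemma indep_only_if: assumes "prob_space.indep_var (unif_W R) (count_space UNIV) (X_rv P b) (count_space UNIV) (X_rv P c)"
  shows "(\<Sum>w\<in>W. X_rv P b w * X_rv P c w) = card W / 4"
proof -
  interpret ps: prob_space "unif_W R" unfolding unif_W_def by (rule prob_space_measure_pmf)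
  have sp: "space (unif_W R) = UNIV" by (simp add: unif_W_def)
  have "measure (unif_W R) ((\<lambda>x. (X_rv P b x, X_rv P c x)) -` ({1} \<times> {1}) \<inter> space (unif_W R)) =
    measure (unif_W R) (X_rv P b -` {1} \<inter> space (unif_W R)) * measure (unif_W R) (X_rv P c -` {1} \<inter> space (unif_W R))"
    by (rule ps.indep_varD[OF assms]) auto
  moreover have "indicator ((\<lambda>x. (X_rv P b x, X_rv P c x)) -` ({1} \<times> {1})) w = X_rv P b w * X_rv P c w" for w
    by (simp add: X_rv_def indicator_def)
  moreover have "indicator (X_rv P x -` {1}) w = X_rv P x w" for x w
    by (simp add: X_rv_def indicator_def)
  ultimately have "(\<Sum>w\<in>W. X_rv P b w * X_rv P c w) / card W = ((\<Sum>w\<in>W. X_rv P b w) / card W) * ((\<Sum>w\<in>W. X_rv P c w) / card W)"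
    unfolding sp prob_W by simp
  moreover have N: "card W > 0" using Wfin Wne by (simp add: card_gt_0_iff)
  ultimately show ?thesis using sum_X[OF bR] sum_X[OF cR] by (simp add: field_simps)
qed

end

theorem theorem3p1:
  fixes R P :: "'a::euclidean_space set" and b c :: 'a
  assumes "root_system R"
    and "positive_system R P"
    and "b \<in> P" and "c \<in> P" and "b \<noteq> c"
  shows "(b \<bullet> c \<ge> 0 \<longrightarrow>
            covariance (unif_W R) (X_rv P b) (X_rv P c) = 1/4 - 1 / (2 * real (ord_refl b c)))
       \<and> (b \<bullet> c \<le> 0 \<longrightarrow>
            covariance (unif_W R) (X_rv P b) (X_rv P c) = - (1/4 - 1 / (2 * real (ord_refl b c))))
       \<and> (prob_space.indep_var (unif_W R) (count_space UNIV) (X_rv P b)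
                                          (count_space UNIV) (X_rv P c)
            \<longleftrightarrow> b \<bullet> c = 0)"
proof -
  obtain v where v: "\<forall>a\<in>R. a \<bullet> v \<noteq> 0" "P = {a\<in>R. a \<bullet> v > 0}"
    using assms(2) unfolding positive_system_def by blast
  interpret rs2 R P b c v
  proof
    show "root_system R" by (rule assms(1))
    show "\<And>a. a \<in> R \<Longrightarrow> a \<bullet> v \<noteq> 0" using v(1) by blast
    show "P = {a\<in>R. a \<bullet> v > 0}" by (rule v(2))
    show "b \<in> P" "c \<in> P" "b \<noteq> c" by (rule assms)+
  qed
  obtain m K where dd: "m \<ge> 2 \<and> (\<forall>p. (Tp A B ^^ m) p = p) \<and> (\<forall>k<m. k = 0 \<or> (Tp A B ^^ k) (1,0) \<noteq> (1,0))
   \<and> (\<forall>\<beta> \<gamma>. gen A B m \<beta> \<gamma> \<longrightarrow> cnt A B m \<beta> \<gamma> = K)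
   \<and> (b \<bullet> c \<ge> 0 \<longrightarrow> K = real m - 1) \<and> (b \<bullet> c \<le> 0 \<longrightarrow> K = 1) \<and> (b \<bullet> c = 0 \<longleftrightarrow> m = 2)"
    using dihedral_data by (elim exE) (rule that)
  note m2 = dd[THEN conjunct1] and per = dd[THEN conjunct2, THEN conjunct1]
    and np = dd[THEN conjunct2, THEN conjunct2, THEN conjunct1]
    and cntK = dd[THEN conjunct2, THEN conjunct2, THEN conjunct2, THEN conjunct1]
    and Kp = dd[THEN conjunct2, THEN conjunct2, THEN conjunct2, THEN conjunct2, THEN conjunct1]
    and Kn = dd[THEN conjunct2, THEN conjunct2, THEN conjunct2, THEN conjunct2, THEN conjunct2, THEN conjunct1]
    and m2iff = dd[THEN conjunct2, THEN conjunct2, THEN conjunct2, THEN conjunct2, THEN conjunct2, THEN conjunct2]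
  have ord: "ord_refl b c = m" using ord_eq[OF m2 per np] .
  have N: "card W > 0" using Wfin Wne by (simp add: card_gt_0_iff)
  have S: "(\<Sum>w\<in>W. X_rv P b w * X_rv P c w) = card W * K / (2 * m)"
    using sum_XY[OF _ cntK] m2 by simp
  have cov: "covariance (unif_W R) (X_rv P b) (X_rv P c) = K / (2 * m) - 1/4"
    using cov_formula S N by simp
  have mpos: "real m > 0" using m2 by simp
  have p1: "b \<bullet> c \<ge> 0 \<longrightarrow> covariance (unif_W R) (X_rv P b) (X_rv P c) = 1/4 - 1 / (2 * real (ord_refl b c))"
  proof
    assume "b \<bullet> c \<ge> 0"
    then have K: "K = real m - 1" using Kp by blast
    show "covariance (unif_W R) (X_rv P b) (X_rv P c) = 1/4 - 1 / (2 * real (ord_refl b c))"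
      unfolding cov ord K using mpos by (simp add: field_simps)
  qed
  have p2: "b \<bullet> c \<le> 0 \<longrightarrow> covariance (unif_W R) (X_rv P b) (X_rv P c) = - (1/4 - 1 / (2 * real (ord_refl b c)))"
  proof
    assume "b \<bullet> c \<le> 0"
    then have K: "K = 1" using Kn by blast
    show "covariance (unif_W R) (X_rv P b) (X_rv P c) = - (1/4 - 1 / (2 * real (ord_refl b c)))"
      unfolding cov ord K using mpos by (simp add: field_simps)
  qed
  have p3: "prob_space.indep_var (unif_W R) (count_space UNIV) (X_rv P b) (count_space UNIV) (X_rv P c)
            \<longleftrightarrow> b \<bullet> c = 0"
  proof
    assume "prob_space.indep_var (unif_W R) (count_space UNIV) (X_rv P b) (count_space UNIV) (X_rv P c)"
    then have "card W * K / (2 * m) = card W / 4" using indep_only_if S by simp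
    then have K: "K = real m / 2" using N mpos by (simp add: field_simps)
    show "b \<bullet> c = 0"
    proof (rule ccontr)
      assume ne: "b \<bullet> c \<noteq> 0"
      then have "m \<noteq> 2" using m2iff by simp
      have "b \<bullet> c > 0 \<or> b \<bullet> c < 0" using ne by linarith
      then have "real m = 2"
      proof
        assume "b \<bullet> c > 0" then have "K = real m - 1" using Kp by simp
        then show "real m = 2" using K by linarith
      next
        assume "b \<bullet> c < 0" then have "K = 1" using Kn by simp
        then show "real m = 2" using K by linarith
      qed
      then show False using \<open>m \<noteq> 2\<close> by simp
    qed
  next
    assume "b \<bullet> c = 0"
    then have "m = 2" "K = 1" using m2iff Kn by auto
    then show "prob_space.indep_var (unif_W R) (count_space UNIV) (X_rv P b) (count_space UNIV) (X_rv P c)"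
      using indep_if S by simp
  qed
  show ?thesis using p1 p2 p3 by blast
qed

end
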